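(* Let $Q(k_1,\dots,k_d)$ be a positive definite diagonal quadratic form in $d\ge2$ variables with integer coefficients, and let $r_Q(n)$ denote the number of integral representations $Q(k_1,\dots,k_d)=n$. Then for every sufficiently small $\delta>0$ there is a constant $C_{d,\delta}$, depending only on $d$ and $\delta$ (and independent of the coefficients of $Q$ and of $n$), such that $r_Q(n)\le C_{d,\delta}\, n^{d/2-1+\delta}$ for all $n\in\mathbb N$. *)

theory Defs
  imports Complex_Main
begin

definition rQ :: "int list \<Rightarrow> nat \<Rightarrow> nat" where
  "rQ as n = card {ks :: int list. length ks = length as \<and>
      (\<Sum>i<length as. as ! i * (ks ! i)^2) = int n}"

end

theory Submission
  imports Defs "HOL-Computational_Algebra.Primes"
begin


lemma geI':
  fixes x p :: int
  assumes "x \<noteq> 0" "prime p" "p^n dvd x"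
  shows "n \<le> multiplicity p x"
proof -
  have "\<bar>p\<bar> \<noteq> 1" using prime_gt_1_int[OF assms(2)] by simp
  then show ?thesis using multiplicity_geI[of x p n] assms by simp
qed

lemma key_dvd:
  fixes M D X Y g h e c :: int
  assumes M: "M > 0" and D: "D > 0" and c0: "c \<noteq> 0"
    and gh: "M dvd g*h" and gc: "g dvd c" and hc: "h dvd c" and ec: "e dvd c"
    and e: "e = gcd X M"
    and f: "\<And>m. m dvd g \<Longrightarrow> m dvd h \<Longrightarrow> m dvd 2*e"
    and eq: "M = X^2 + D*Y^2" and cop: "coprime Y M"
  shows "M^2 dvd 4*D*c^2"
proof (rule multiplicity_le_imp_dvd)
  show "M^2 \<noteq> 0" using M by simp
  fix p :: int assume p: "prime p"
  have g0: "g \<noteq> 0" using gc c0 by auto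
  have h0: "h \<noteq> 0" using hc c0 by auto
  have e0: "e \<noteq> 0" using ec c0 by auto
  define \<gamma> where "\<gamma> = multiplicity p M"
  define \<beta> where "\<beta> = multiplicity p D"
  define vc where "vc = multiplicity p c"
  define v2 where "v2 = multiplicity p (2::int)"
  define \<epsilon> where "\<epsilon> = multiplicity p e"
  define mg where "mg = multiplicity p g"
  define mh where "mh = multiplicity p h"
  have pe: "prime_elem p" using p by (rule prime_imp_prime_elem)
  have lhs: "multiplicity p (M^2) = 2*\<gamma>"
    using M pe by (simp add: prime_elem_multiplicity_power_distrib \<gamma>_def)
  have rhs: "multiplicity p (4*D*c^2) = 2*v2 + \<beta> + 2*vc"
  proof -
    have "multiplicity p ((2::int)^2) = 2*v2"
      using pe by (subst prime_elem_multiplicity_power_distrib) (simp_all add: v2_def)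
    then have "multiplicity p (4::int) = 2*v2" by simp
    then show ?thesis using pe D c0
      by (simp add: prime_elem_multiplicity_mult_distrib prime_elem_multiplicity_power_distrib \<beta>_def vc_def)
  qed
  have f1: "\<gamma> \<le> mg + mh"
  proof -
    have "\<gamma> \<le> multiplicity p (g*h)" unfolding \<gamma>_def
      by (rule dvd_imp_multiplicity_le[OF gh]) (use g0 h0 in simp)
    then show ?thesis using pe g0 h0 by (simp add: prime_elem_multiplicity_mult_distrib mg_def mh_def)
  qed
  have f2: "mg \<le> vc" "mh \<le> vc" "\<epsilon> \<le> vc"
    unfolding mg_def mh_def \<epsilon>_def vc_def
    using dvd_imp_multiplicity_le[OF gc c0] dvd_imp_multiplicity_le[OF hc c0]
      dvd_imp_multiplicity_le[OF ec c0] by auto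
  have f3: "min mg mh \<le> v2 + \<epsilon>"
  proof -
    have "p ^ min mg mh dvd g" unfolding mg_def by (rule multiplicity_dvd') simp
    moreover have "p ^ min mg mh dvd h" unfolding mh_def by (rule multiplicity_dvd') simp
    ultimately have "p ^ min mg mh dvd 2*e" by (rule f)
    then have "min mg mh \<le> multiplicity p (2*e)"
      by (intro geI') (use e0 p in auto)
    then show ?thesis using pe e0 by (simp add: prime_elem_multiplicity_mult_distrib v2_def \<epsilon>_def)
  qed
  have f4: "\<gamma> \<le> \<beta>" if "\<beta> < 2*\<epsilon>" "\<gamma> \<ge> 1"
  proof (rule ccontr)
    assume "\<not> \<gamma> \<le> \<beta>"
    then have "p^(\<beta>+1) dvd M" unfolding \<gamma>_def by (intro multiplicity_dvd') simp
    moreover have "p^(\<beta>+1) dvd X^2"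
    proof -
      have "p^\<epsilon> dvd X" using multiplicity_dvd[of p e] e by (metis dvd_trans gcd_dvd1 \<epsilon>_def)
      then have "(p^\<epsilon>)^2 dvd X^2" by simp
      moreover have "p^(\<beta>+1) dvd (p^\<epsilon>)^2"
      proof -
        have "p^(\<beta>+1) dvd p^(2*\<epsilon>)" using that(1) by (intro le_imp_power_dvd) simp
        then show ?thesis by (simp add: power_mult mult.commute)
      qed
      ultimately show ?thesis using dvd_trans by blast
    qed
    ultimately have "p^(\<beta>+1) dvd D*Y^2" using eq by (metis add_diff_cancel_left' dvd_diff)
    moreover have "coprime (p^(\<beta>+1)) (Y^2)"
    proof -
      have "p dvd M" using that(2) unfolding \<gamma>_def
        by (metis multiplicity_dvd' power_one_right)
      then have "\<not> p dvd Y" using cop p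
        by (metis coprime_common_divisor not_prime_unit)
      then have "coprime p Y" using p by (simp add: prime_imp_coprime)
      then show ?thesis by simp
    qed
    ultimately have "p^(\<beta>+1) dvd D" by (simp add: coprime_dvd_mult_left_iff)
    then have "\<beta>+1 \<le> \<beta>" unfolding \<beta>_def
      by (intro geI') (use D p in auto)
    then show False by simp
  qed
  have "2*\<gamma> \<le> 2*v2 + \<beta> + 2*vc"
  proof (cases "2*\<epsilon> \<le> \<beta>")
    case True then show ?thesis using f1 f2 f3 by linarith
  next
    case False
    show ?thesis
    proof (cases "\<gamma> = 0")
      case True then show ?thesis by simp
    next
      case False2: False
      then have "\<gamma> \<le> \<beta>" using f4 False by simp
      then show ?thesis using False f2 by linarith
    qed
  qed
  then show "multiplicity p (M^2) \<le> multiplicity p (4*D*c^2)" using lhs rhs by simp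
qed




definition divs :: "int \<Rightarrow> int set" where "divs M = {d. 0 < d \<and> d dvd M}"

lemma finite_divs: "M \<noteq> 0 \<Longrightarrow> finite (divs M)"
proof -
  assume "M \<noteq> 0"
  then have "divs M \<subseteq> {1..\<bar>M\<bar>}" unfolding divs_def
    by (auto dest: dvd_imp_le_int)
  then show ?thesis by (rule finite_subset) simp
qed

lemma fiber10:
  fixes D M :: int
  assumes D: "D > 0" and M: "M > 0"
    and F: "F \<subseteq> {(x,y). x^2 + D*y^2 = M}"
    and div: "\<And>x y x' y'. (x,y) \<in> F \<Longrightarrow> (x',y') \<in> F \<Longrightarrow> M^2 dvd 4*D*(x*y' - x'*y)^2"
  shows "card F \<le> 10"
proof (cases "F = {}")
  case True then show ?thesis by simp
next
  case False
  then obtain X1 Y1 where P1: "(X1,Y1) \<in> F" by auto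
  then have M1: "X1^2 + D*Y1^2 = M" using F by auto
  define \<phi> where "\<phi> = (\<lambda>(x::int,y::int). (X1*x + D*Y1*y, X1*y - Y1*x))"
  have inj: "inj_on \<phi> F"
  proof (rule inj_onI)
    fix P Q assume "P \<in> F" "Q \<in> F" "\<phi> P = \<phi> Q"
    obtain x y where P: "P = (x,y)" by force
    obtain x' y' where Q: "Q = (x',y')" by force
    have e1: "X1*x + D*Y1*y = X1*x' + D*Y1*y'" and e2: "X1*y - Y1*x = X1*y' - Y1*x'"
      using \<open>\<phi> P = \<phi> Q\<close> by (auto simp: \<phi>_def P Q)
    have "M*x = X1*(X1*x + D*Y1*y) - D*Y1*(X1*y - Y1*x)" unfolding M1[symmetric] by (simp add: algebra_simps power2_eq_square)
    also have "\<dots> = X1*(X1*x' + D*Y1*y') - D*Y1*(X1*y' - Y1*x')" using e1 e2 by simp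
    also have "\<dots> = M*x'" unfolding M1[symmetric] by (simp add: algebra_simps power2_eq_square)
    finally have "x = x'" using M by simp
    have "M*y = Y1*(X1*x + D*Y1*y) + X1*(X1*y - Y1*x)" unfolding M1[symmetric] by (simp add: algebra_simps power2_eq_square)
    also have "\<dots> = Y1*(X1*x' + D*Y1*y') + X1*(X1*y' - Y1*x')" using e1 e2 by simp
    also have "\<dots> = M*y'" unfolding M1[symmetric] by (simp add: algebra_simps power2_eq_square)
    finally have "y = y'" using M by simp
    show "P = Q" using P Q \<open>x = x'\<close> \<open>y = y'\<close> by simp
  qed
  define T where "T = {t::int. M dvd 2*t \<and> \<bar>t\<bar> \<le> M}"
  define W where "W = (\<lambda>t::int. {w::int. t^2 + D*w^2 = M^2})"
  have img: "\<phi> ` F \<subseteq> (\<Union>t\<in>T. {t} \<times> W t)"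
  proof
    fix z assume "z \<in> \<phi> ` F"
    then obtain x y where xy: "(x,y) \<in> F" and z: "z = \<phi> (x,y)" by auto
    define t where "t = X1*x + D*Y1*y"
    define w where "w = X1*y - Y1*x"
    have Mx: "x^2 + D*y^2 = M" using xy F by auto
    have id: "t^2 + D*w^2 = M^2"
    proof -
      have "t^2 + D*w^2 = (X1^2 + D*Y1^2)*(x^2 + D*y^2)"
        unfolding t_def w_def by (simp add: algebra_simps power2_eq_square)
      then show ?thesis using M1 Mx by (simp add: power2_eq_square)
    qed
    have "M^2 dvd 4*D*w^2" unfolding w_def using div[OF P1 xy] by (simp add: mult.commute)
    then have "M^2 dvd 4*M^2 - 4*D*w^2" by (simp add: dvd_diff)
    moreover have "4*M^2 - 4*D*w^2 = (2*t)^2" using id by (simp add: algebra_simps power2_eq_square)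
    ultimately have "M^2 dvd (2*t)^2" by simp
    then have "M dvd 2*t" using pow_divides_pow_iff[of 2 M "2*t"] by simp
    moreover have "\<bar>t\<bar> \<le> M"
    proof -
      have "t^2 \<le> M^2" using id D by (smt (verit) mult_nonneg_nonneg zero_le_power2)
      then show ?thesis using M by (metis abs_le_square_iff abs_of_pos)
    qed
    ultimately have "t \<in> T" unfolding T_def by simp
    moreover have "w \<in> W t" unfolding W_def using id by simp
    ultimately show "z \<in> (\<Union>t\<in>T. {t} \<times> W t)" using z by (auto simp: \<phi>_def t_def w_def)
  qed
  have T5: "card T \<le> 5"
  proof -
    have "T \<subseteq> (\<lambda>j. j*M div 2) ` {-2..2}"
    proof
      fix t assume "t \<in> T"
      then obtain j where j: "2*t = M*j" and tb: "\<bar>t\<bar> \<le> M" unfolding T_def by (auto elim!: dvdE)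
      have "\<bar>M*j\<bar> \<le> 2*M" using j tb by linarith
      then have "M*\<bar>j\<bar> \<le> M*2" using M by (simp add: abs_mult mult.commute)
      then have "\<bar>j\<bar> \<le> 2" using M by simp
      moreover have "t = j*M div 2" using j by (simp add: mult.commute)
      moreover have "j \<in> {-2..2}" using calculation(1) by auto
      ultimately show "t \<in> (\<lambda>j. j*M div 2) ` {-2..2}" by (intro image_eqI[of _ _ j]) auto
    qed
    then have "card T \<le> card ((\<lambda>j. j*M div 2) ` {-2..2::int})" by (intro card_mono) auto
    also have "\<dots> \<le> card {-2..2::int}" by (rule card_image_le) simp
    finally show ?thesis by simp
  qed
  have W2: "card (W t) \<le> 2" for t
  proof (cases "W t = {}")
    case True then show ?thesis by simp
  next
    case False
    then obtain w0 where w0: "w0 \<in> W t" by auto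
    have "W t \<subseteq> {w0, -w0}"
    proof
      fix w assume "w \<in> W t"
      then have a: "t^2 + D*w^2 = M^2" unfolding W_def by simp
      have b: "t^2 + D*w0^2 = M^2" using w0 unfolding W_def by simp
      from a b have "D*w^2 = D*w0^2" by linarith
      then have "w^2 = w0^2" using D by simp
      then show "w \<in> {w0, -w0}" by (auto simp: power2_eq_iff)
    qed
    then have "card (W t) \<le> card {w0, -w0}" by (intro card_mono) auto
    also have "\<dots> \<le> 2" by (simp add: card_insert_le_m1)
    finally show ?thesis .
  qed
  have finT: "finite T" unfolding T_def by (rule finite_subset[of _ "{-M..M}"]) auto
  have finW: "finite (W t)" for t
  proof (cases "W t = {}")
    case True then show ?thesis by simp
  next
    case False
    then obtain w0 where w0: "w0 \<in> W t" by auto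
    have "W t \<subseteq> {w0, -w0}"
    proof
      fix w assume "w \<in> W t"
      then have a: "t^2 + D*w^2 = M^2" unfolding W_def by simp
      have b: "t^2 + D*w0^2 = M^2" using w0 unfolding W_def by simp
      from a b have "D*w^2 = D*w0^2" by linarith
      then have "w^2 = w0^2" using D by simp
      then show "w \<in> {w0, -w0}" by (auto simp: power2_eq_iff)
    qed
    then show ?thesis by (rule finite_subset) simp
  qed
  have "card F = card (\<phi> ` F)" using inj by (simp add: card_image)
  also have "\<dots> \<le> card (\<Union>t\<in>T. {t} \<times> W t)"
    using img finT finW by (intro card_mono) auto
  also have "\<dots> \<le> (\<Sum>t\<in>T. card ({t} \<times> W t))" using finT by (rule card_UN_le)
  also have "\<dots> \<le> (\<Sum>t\<in>T. 2)" using W2 by (intro sum_mono) (simp add: card_cartesian_product)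
  also have "\<dots> = 2 * card T" by simp
  also have "\<dots> \<le> 10" using T5 by simp
  finally show ?thesis .
qed




definition Prim :: "int \<Rightarrow> int \<Rightarrow> (int\<times>int) set" where
  "Prim D M = {(x,y). x^2 + D*y^2 = M \<and> coprime x y}"

definition S2 :: "int \<Rightarrow> int \<Rightarrow> int \<Rightarrow> (int\<times>int) set" where
  "S2 a b n = {(x,y). a*x^2 + b*y^2 = n}"

lemma finite_S2:
  fixes a b n :: int
  assumes "a > 0" "b > 0"
  shows "finite (S2 a b n)"
proof -
  have bx: "\<bar>x\<bar> \<le> \<bar>n\<bar>" if "c > 0" "c*x^2 \<le> n" for x c :: int
  proof -
    have "\<bar>x\<bar> \<le> x^2"
    proof (cases "x = 0")
      case False
      then have "1 \<le> \<bar>x\<bar>" by simp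
      then have "\<bar>x\<bar> * 1 \<le> \<bar>x\<bar> * \<bar>x\<bar>" by (intro mult_left_mono) auto
      then show ?thesis by (simp add: power2_eq_square abs_mult_self_eq)
    qed simp
    also have "x^2 \<le> c*x^2" using that by (simp add: mult_le_cancel_right1)
    also have "c*x^2 \<le> n" by fact
    finally show ?thesis by simp
  qed
  have bx1: "\<bar>x\<bar> \<le> \<bar>n\<bar>" if "a*x^2 + b*y^2 = n" for x y :: int
  proof -
    have "b*y^2 \<ge> 0" using assms by simp
    then have "a*x^2 \<le> n" using that by linarith
    then show ?thesis using bx assms by blast
  qed
  have by': "\<bar>y\<bar> \<le> \<bar>n\<bar>" if "a*x^2 + b*y^2 = n" for x y :: int
  proof -
    have "a*x^2 \<ge> 0" using assms by simp
    then have "b*y^2 \<le> n" using that by linarith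
    then show ?thesis using bx assms by blast
  qed
  have "S2 a b n \<subseteq> {-\<bar>n\<bar>..\<bar>n\<bar>} \<times> {-\<bar>n\<bar>..\<bar>n\<bar>}"
  proof
    fix P assume "P \<in> S2 a b n"
    then obtain x y where P: "P = (x,y)" "a*x^2 + b*y^2 = n" by (auto simp: S2_def)
    have "\<bar>x\<bar> \<le> \<bar>n\<bar>" "\<bar>y\<bar> \<le> \<bar>n\<bar>" using bx1[OF P(2)] by'[OF P(2)] by auto
    then show "P \<in> {-\<bar>n\<bar>..\<bar>n\<bar>} \<times> {-\<bar>n\<bar>..\<bar>n\<bar>}" using P(1) by (simp add: abs_le_iff)
  qed
  then show ?thesis by (rule finite_subset) simp
qed

lemma finite_Prim: "D > 0 \<Longrightarrow> finite (Prim D M)"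
  by (rule finite_subset[OF _ finite_S2[of 1 D M]]) (auto simp: Prim_def S2_def)

lemma cop_form: "coprime (x::int) y \<Longrightarrow> coprime y (x^2 + D*y^2)"
proof -
  assume "coprime x y"
  have "gcd y ((D*y)*y + x^2) = gcd y (x^2)" by (rule gcd_add_mult)
  moreover have "coprime y (x^2)" using \<open>coprime x y\<close> by (simp add: coprime_commute)
  ultimately show ?thesis by (simp add: coprime_iff_gcd_eq_1 add.commute mult.assoc power2_eq_square)
qed

lemma dvd_gcd_prod:
  fixes u v M :: int
  assumes "M dvd u*v"
  shows "M dvd gcd u M * gcd v M"
proof -
  define G where "G = gcd v M"
  have G0: "G \<ge> 0" unfolding G_def by simp
  obtain s t where st: "s*v + t*M = G" using bezout_int[of v M] unfolding G_def by blast
  have "gcd u M * G = gcd (G*u) (G*M)" using G0 gcd_mult_distrib_int[of G u M] by (simp add: mult.commute)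
  moreover have "M dvd G*u"
  proof -
    have "G*u = s*(u*v) + t*u*M" by (simp add: st[symmetric] algebra_simps)
    then show ?thesis using assms by simp
  qed
  moreover have "M dvd G*M" by simp
  ultimately show ?thesis unfolding G_def by simp
qed

lemma prim_count:
  fixes D M :: int
  assumes D: "D > 0" and M: "M > 0"
  shows "card (Prim D M) \<le> 10 * card (divs M)^3"
proof (cases "Prim D M = {}")
  case True then show ?thesis by simp
next
  case False
  then obtain X0 Y0 where P0: "(X0,Y0) \<in> Prim D M" by auto
  have M0: "X0^2 + D*Y0^2 = M" and cop0: "coprime Y0 M"
    using P0 cop_form[of X0 Y0 D] by (auto simp: Prim_def)
  define key where "key = (\<lambda>(x::int,y::int). (gcd (x*Y0 - X0*y) M, gcd (x*Y0 + X0*y) M, gcd x M))"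
  define K where "K = divs M \<times> divs M \<times> divs M"
  define fib where "fib = (\<lambda>k. {P \<in> Prim D M. key P = k})"
  have finK: "finite K" unfolding K_def using finite_divs[of M] M by simp
  have cover: "Prim D M \<subseteq> (\<Union>k\<in>K. fib k)"
  proof
    fix P assume P: "P \<in> Prim D M"
    obtain x y where xy: "P = (x,y)" by force
    have "key P \<in> K" unfolding K_def divs_def key_def xy using M by auto
    then show "P \<in> (\<Union>k\<in>K. fib k)" using P unfolding fib_def by auto
  qed
  have fb: "card (fib k) \<le> 10" for k
  proof (rule fiber10[OF D M])
    show "fib k \<subseteq> {(x,y). x^2 + D*y^2 = M}" unfolding fib_def Prim_def by auto
  next
    fix x y x' y' assume A: "(x,y) \<in> fib k" "(x',y') \<in> fib k"
    have eqs: "x^2 + D*y^2 = M" "x'^2 + D*y'^2 = M" "coprime x y" "coprime x' y'"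
      using A unfolding fib_def Prim_def by auto
    have keq: "key (x,y) = key (x',y')" using A unfolding fib_def by auto
    define u where "u = x*Y0 - X0*y"
    define v where "v = x*Y0 + X0*y"
    define u' where "u' = x'*Y0 - X0*y'"
    define v' where "v' = x'*Y0 + X0*y'"
    define c where "c = x*y' - x'*y"
    define g where "g = gcd u M"
    define h where "h = gcd v M"
    define e where "e = gcd x M"
    have gg: "g = gcd u' M" and hh: "h = gcd v' M" and ee: "e = gcd x' M"
      using keq unfolding key_def g_def h_def e_def u_def v_def u'_def v'_def by auto
    show "M^2 dvd 4*D*(x*y' - x'*y)^2"
    proof (cases "c = 0")
      case True then show ?thesis unfolding c_def by simp
    next
      case False
      have cop0': "coprime M Y0" using cop0 by (simp add: coprime_commute)
      have copg: "coprime g Y0"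
        unfolding g_def by (rule coprime_divisors[OF gcd_dvd2 dvd_refl cop0'])
      have coph: "coprime h Y0"
        unfolding h_def by (rule coprime_divisors[OF gcd_dvd2 dvd_refl cop0'])
      have "M dvd u*v"
      proof -
        have "u*v = M*(Y0^2 - y^2)"
        proof -
          have "u*v = x^2*Y0^2 - X0^2*y^2" unfolding u_def v_def by (simp add: algebra_simps power2_eq_square)
          also have "\<dots> = (M - D*y^2)*Y0^2 - (M - D*Y0^2)*y^2" using eqs(1) M0 by (metis add_diff_cancel_right')
          also have "\<dots> = M*(Y0^2 - y^2)" by (simp add: algebra_simps)
          finally show ?thesis .
        qed
        then show ?thesis by simp
      qed
      then have gh: "M dvd g*h" unfolding g_def h_def by (rule dvd_gcd_prod)
      have gc: "g dvd c"
      proof -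
        have "g dvd u" unfolding g_def by simp
        moreover have "g dvd u'" using gg by simp
        ultimately have "g dvd y'*u - y*u'" by (intro dvd_diff dvd_mult)
        moreover have "y'*u - y*u' = Y0*c" unfolding u_def u'_def c_def by (simp add: algebra_simps)
        ultimately have "g dvd Y0*c" by simp
        then show ?thesis using copg by (simp add: coprime_dvd_mult_right_iff)
      qed
      have hc: "h dvd c"
      proof -
        have "h dvd v" unfolding h_def by simp
        moreover have "h dvd v'" using hh by simp
        ultimately have "h dvd y'*v - y*v'" by (intro dvd_diff dvd_mult)
        moreover have "y'*v - y*v' = Y0*c" unfolding v_def v'_def c_def by (simp add: algebra_simps)
        ultimately have "h dvd Y0*c" by simp
        then show ?thesis using coph by (simp add: coprime_dvd_mult_right_iff)
      qed
      have ec: "e dvd c"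
      proof -
        have "e dvd x" unfolding e_def by simp
        moreover have "e dvd x'" using ee by simp
        ultimately
        show ?thesis unfolding c_def by (intro dvd_diff dvd_mult2)
      qed
      have f: "m dvd 2*e" if "m dvd g" "m dvd h" for m
      proof -
        have "m dvd u" "m dvd v" "m dvd M" using that unfolding g_def h_def by (auto intro: dvd_trans)
        then have "m dvd u + v" by simp
        moreover have "u + v = Y0*(2*x)" unfolding u_def v_def by (simp add: algebra_simps)
        ultimately have "m dvd Y0*(2*x)" by simp
        moreover have "coprime m Y0" by (rule coprime_divisors[OF \<open>m dvd M\<close> dvd_refl cop0'])
        ultimately have "m dvd 2*x" by (simp add: coprime_dvd_mult_right_iff)
        moreover have "m dvd 2*M" using \<open>m dvd M\<close> by simp
        ultimately have "m dvd gcd (2*x) (2*M)" by simp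
        also have "gcd (2*x) (2*M) = 2*e" unfolding e_def using gcd_mult_distrib_int[of 2 x M] by simp
        finally show ?thesis .
      qed
      have cy: "coprime y M" using cop_form[OF eqs(3), of D] eqs(1) by simp
      have "M^2 dvd 4*D*c^2"
        by (rule key_dvd[OF M D False gh gc hc ec e_def f eqs(1)[symmetric] cy])
      then show ?thesis unfolding c_def .
    qed
  qed
  have "card (Prim D M) \<le> card (\<Union>k\<in>K. fib k)"
    using cover finK finite_Prim[OF D] by (intro card_mono) (auto simp: fib_def intro!: finite_UN_I)
  also have "\<dots> \<le> (\<Sum>k\<in>K. card (fib k))" using finK by (rule card_UN_le)
  also have "\<dots> \<le> (\<Sum>k\<in>K. 10)" using fb by (intro sum_mono) auto
  also have "\<dots> = 10 * card (divs M)^3" unfolding K_def by (simp add: card_cartesian_product power3_eq_cube)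
  finally show ?thesis .
qed

lemma S2_one_count:
  fixes D N :: int
  assumes D: "D > 0" and N: "N > 0"
  shows "card (S2 1 D N) \<le> 10 * card (divs N)^4"
proof -
  define I where "I = {c \<in> divs N. c^2 dvd N}"
  define sc where "sc = (\<lambda>c::int. \<lambda>(x::int,y::int). (c*x, c*y))"
  have finI: "finite I" unfolding I_def using finite_divs[of N] N by auto
  have cover: "S2 1 D N \<subseteq> (\<Union>c\<in>I. sc c ` Prim D (N div c^2))"
  proof
    fix P assume P: "P \<in> S2 1 D N"
    obtain X Y where XY: "P = (X,Y)" by force
    have eq: "X^2 + D*Y^2 = N" using P XY by (simp add: S2_def)
    have nz: "X \<noteq> 0 \<or> Y \<noteq> 0" using eq N by auto
    define c where "c = gcd X Y"
    have c0: "c > 0" using nz unfolding c_def by auto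
    define x where "x = X div c"
    define y where "y = Y div c"
    have Xc: "X = c*x" unfolding x_def c_def by simp
    have Yc: "Y = c*y" unfolding y_def c_def by simp
    have cop: "coprime x y" unfolding x_def y_def c_def by (rule div_gcd_coprime[OF nz])
    have Nc: "N = c^2 * (x^2 + D*y^2)" using eq Xc Yc by (simp add: algebra_simps power2_eq_square)
    have "c^2 dvd N" using Nc by simp
    moreover have "c dvd N" using Nc by (simp add: power2_eq_square)
    ultimately have cI: "c \<in> I" using c0 unfolding I_def divs_def by simp
    have "N div c^2 = x^2 + D*y^2" using Nc c0 by simp
    then have "(x,y) \<in> Prim D (N div c^2)" using cop by (simp add: Prim_def)
    moreover have "P = sc c (x,y)" using XY Xc Yc by (simp add: sc_def)
    ultimately show "P \<in> (\<Union>c\<in>I. sc c ` Prim D (N div c^2))" using cI by blast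
  qed
  have each: "card (sc c ` Prim D (N div c^2)) \<le> 10 * card (divs N)^3" if "c \<in> I" for c
  proof -
    have c0: "c > 0" and cd: "c^2 dvd N" using that unfolding I_def divs_def by auto
    define m where "m = N div c^2"
    have Nm: "N = c^2 * m" using cd unfolding m_def by simp
    have "0 < c^2 * m" using Nm N by simp
    then have m0: "m > 0" using c0 by (simp add: zero_less_mult_iff)
    have "divs m \<subseteq> divs N" unfolding divs_def using Nm by auto
    then have dm: "card (divs m) \<le> card (divs N)" using finite_divs[of N] N by (intro card_mono) auto
    have "card (sc c ` Prim D m) \<le> card (Prim D m)" by (rule card_image_le[OF finite_Prim[OF D]])
    also have "\<dots> \<le> 10 * card (divs m)^3" by (rule prim_count[OF D m0])
    also have "\<dots> \<le> 10 * card (divs N)^3" using dm by (simp add: power_mono)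
    finally show ?thesis unfolding m_def .
  qed
  have "card (S2 1 D N) \<le> card (\<Union>c\<in>I. sc c ` Prim D (N div c^2))"
    using cover finI finite_Prim[OF D] by (intro card_mono) auto
  also have "\<dots> \<le> (\<Sum>c\<in>I. card (sc c ` Prim D (N div c^2)))" using finI by (rule card_UN_le)
  also have "\<dots> \<le> (\<Sum>c\<in>I. 10 * card (divs N)^3)" using each by (intro sum_mono) auto
  also have "\<dots> = card I * (10 * card (divs N)^3)" by simp
  also have "\<dots> \<le> card (divs N) * (10 * card (divs N)^3)"
    using finite_divs[of N] N by (intro mult_right_mono card_mono) (auto simp: I_def)
  also have "\<dots> = 10 * card (divs N)^4" by (simp add: power_Suc[symmetric] del: power_Suc)
  finally show ?thesis .
qed

lemma S2_count:
  fixes a b n :: int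
  assumes a: "a > 0" and b: "b > 0" and n: "n > 0"
  shows "card (S2 a b n) \<le> 10 * card (divs (n^2))^4"
proof (cases "S2 a b n = {}")
  case True then show ?thesis by simp
next
  case False
  then obtain x0 y0 where P0: "a*x0^2 + b*y0^2 = n" by (auto simp: S2_def)
  define \<phi> where "\<phi> = (\<lambda>(x::int,y::int). (a*x0*x + b*y0*y, x0*y - y0*x))"
  have inj: "inj_on \<phi> (S2 a b n)"
  proof (rule inj_onI)
    fix P Q assume "P \<in> S2 a b n" "Q \<in> S2 a b n" "\<phi> P = \<phi> Q"
    obtain x y where P: "P = (x,y)" by force
    obtain x' y' where Q: "Q = (x',y')" by force
    have e1: "a*x0*x + b*y0*y = a*x0*x' + b*y0*y'" and e2: "x0*y - y0*x = x0*y' - y0*x'"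
      using \<open>\<phi> P = \<phi> Q\<close> by (auto simp: \<phi>_def P Q)
    have "n*x = x0*(a*x0*x + b*y0*y) - b*y0*(x0*y - y0*x)" unfolding P0[symmetric] by (simp add: algebra_simps power2_eq_square)
    also have "\<dots> = x0*(a*x0*x' + b*y0*y') - b*y0*(x0*y' - y0*x')" using e1 e2 by simp
    also have "\<dots> = n*x'" unfolding P0[symmetric] by (simp add: algebra_simps power2_eq_square)
    finally have "x = x'" using n by simp
    have "n*y = y0*(a*x0*x + b*y0*y) + a*x0*(x0*y - y0*x)" unfolding P0[symmetric] by (simp add: algebra_simps power2_eq_square)
    also have "\<dots> = y0*(a*x0*x' + b*y0*y') + a*x0*(x0*y' - y0*x')" using e1 e2 by simp
    also have "\<dots> = n*y'" unfolding P0[symmetric] by (simp add: algebra_simps power2_eq_square)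
    finally have "y = y'" using n by simp
    show "P = Q" using P Q \<open>x = x'\<close> \<open>y = y'\<close> by simp
  qed
  have img: "\<phi> ` S2 a b n \<subseteq> S2 1 (a*b) (n^2)"
  proof
    fix z assume "z \<in> \<phi> ` S2 a b n"
    then obtain x y where xy: "a*x^2 + b*y^2 = n" and z: "z = \<phi> (x,y)" by (auto simp: S2_def)
    have "(a*x0*x + b*y0*y)^2 + (a*b)*(x0*y - y0*x)^2 = (a*x0^2 + b*y0^2)*(a*x^2 + b*y^2)"
      by (simp add: algebra_simps power2_eq_square)
    then show "z \<in> S2 1 (a*b) (n^2)" using xy P0 z by (simp add: S2_def \<phi>_def power2_eq_square)
  qed
  have "card (S2 a b n) \<le> card (S2 1 (a*b) (n^2))"
    by (rule card_inj_on_le[OF inj img finite_S2]) (use a b in auto)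
  also have "\<dots> \<le> 10 * card (divs (n^2))^4" by (rule S2_one_count) (use a b n in auto)
  finally show ?thesis .
qed



definition tau :: "nat \<Rightarrow> nat" where "tau n = card {d. d dvd n}"

lemma tau_submult:
  assumes "a > 0" "b > 0"
  shows "tau (a*b) \<le> tau a * tau b"
proof -
  have fa: "finite {d. d dvd a}" using assms by simp
  have fb: "finite {d. d dvd b}" using assms by simp
  have "{d. d dvd a*b} \<subseteq> (\<lambda>(d1,d2). d1*d2) ` ({d. d dvd a} \<times> {d. d dvd b})"
  proof
    fix d assume "d \<in> {d. d dvd a*b}"
    then obtain d1 d2 where "d = d1*d2" "d1 dvd a" "d2 dvd b" using division_decomp[of d a b] by auto
    then show "d \<in> (\<lambda>(d1,d2). d1*d2) ` ({d. d dvd a} \<times> {d. d dvd b})" by auto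
  qed
  then have "tau (a*b) \<le> card ((\<lambda>(d1,d2). d1*d2) ` ({d. d dvd a} \<times> {d. d dvd b}))"
    unfolding tau_def using fa fb by (intro card_mono) auto
  also have "\<dots> \<le> card ({d. d dvd a} \<times> {d. d dvd b})" by (rule card_image_le) (use fa fb in auto)
  also have "\<dots> = tau a * tau b" unfolding tau_def by (simp add: card_cartesian_product)
  finally show ?thesis .
qed

lemma tau_primepow:
  assumes "prime (p::nat)"
  shows "tau (p^k) \<le> k + 1"
proof -
  have "{d. d dvd p^k} \<subseteq> (\<lambda>i. p^i) ` {..k}" using divides_primepow_nat[OF assms] by auto
  then have "tau (p^k) \<le> card ((\<lambda>i. p^i) ` {..k})" unfolding tau_def by (intro card_mono) auto
  also have "\<dots> \<le> card {..k}" by (rule card_image_le) simp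
  finally show ?thesis by simp
qed

lemma tau_bound_aux:
  fixes \<epsilon> B :: real and P0 :: nat
  assumes eps: "\<epsilon> > 0" and B1: "B \<ge> 1"
    and big: "\<And>p k. prime p \<Longrightarrow> p \<ge> P0 \<Longrightarrow> real k + 1 \<le> real p powr (real k * \<epsilon>)"
    and small: "\<And>p k. prime p \<Longrightarrow> real k + 1 \<le> B * real p powr (real k * \<epsilon>)"
  shows "n > 0 \<Longrightarrow> real (tau n) \<le> B ^ card {p. prime p \<and> p dvd n \<and> p < P0} * real n powr \<epsilon>"
proof (induction n rule: less_induct)
  case (less n)
  show ?case
  proof (cases "n = 1")
    case True
    have "{p. prime p \<and> p dvd (1::nat) \<and> p < P0} = {}" by auto
    moreover have "tau 1 = 1" by (simp add: tau_def)
    ultimately show ?thesis unfolding True by (simp only:) simp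
  next
    case False
    then obtain p where p: "prime p" "p dvd n" using prime_factor_nat by blast
    have n0: "n \<noteq> 0" using less.prems by simp
    have pu: "\<not> is_unit p" using p(1) by (metis not_prime_unit)
    obtain m where nm: "n = p ^ multiplicity p n * m" and pm: "\<not> p dvd m"
      by (rule multiplicity_decompose'[OF n0 pu])
    define k where "k = multiplicity p n"
    have nm': "n = p^k * m" using nm k_def by simp
    have m0: "m > 0" using nm' less.prems by (cases "m = 0") auto
    have k0: "k \<noteq> 0" using nm' p(2) pm by (cases "k = 0") auto
    have p2: "p \<ge> 2" using p(1) by (simp add: prime_ge_2_nat)
    have "p^1 \<le> p^k" using k0 p2 by (intro power_increasing) auto
    then have "1 < p^k" using p2 by simp
    then have "1*m < p^k * m" using m0 by (intro mult_strict_right_mono) auto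
    then have mn: "m < n" using nm' by simp
    have IH: "real (tau m) \<le> B ^ card {q. prime q \<and> q dvd m \<and> q < P0} * real m powr \<epsilon>"
      using less.IH[OF mn m0] .
    define Sn where "Sn = {q. prime q \<and> q dvd n \<and> q < P0}"
    define Sm where "Sm = {q. prime q \<and> q dvd m \<and> q < P0}"
    have finSn: "finite Sn" unfolding Sn_def by (rule finite_subset[of _ "{..<P0}"]) auto
    have SmSn: "Sm \<subseteq> Sn" unfolding Sm_def Sn_def using nm' by auto
    have pSm: "p \<notin> Sm" unfolding Sm_def using pm by auto
    have tn: "real (tau n) \<le> (real k + 1) * real (tau m)"
    proof -
      have "tau n \<le> tau (p^k) * tau m" unfolding nm' by (rule tau_submult) (use p2 m0 in auto)
      also have "\<dots> \<le> (k+1) * tau m" using tau_primepow[OF p(1)] by (intro mult_right_mono) auto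
      finally have "real (tau n) \<le> real ((k+1) * tau m)" by (simp only: of_nat_le_iff)
      then show ?thesis by (simp add: algebra_simps)
    qed
    have npow: "real n powr \<epsilon> = real p powr (real k * \<epsilon>) * real m powr \<epsilon>"
    proof -
      have "real n powr \<epsilon> = (real p ^ k) powr \<epsilon> * real m powr \<epsilon>" unfolding nm' by (simp add: powr_mult)
      also have "(real p ^ k) powr \<epsilon> = real p powr (real k * \<epsilon>)"
        using p2 by (simp add: powr_realpow[symmetric] powr_powr)
      finally show ?thesis .
    qed
    have Bpos: "B > 0" using B1 by simp
    have mp: "real m powr \<epsilon> \<ge> 0" by simp
    have pp: "real p powr (real k * \<epsilon>) \<ge> 0" by simp
    show ?thesis
    proof (cases "p < P0")
      case True
      have "p \<in> Sn" unfolding Sn_def using True p by auto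
      then have "Sm \<subseteq> Sn - {p}" using SmSn pSm by auto
      then have "card Sm \<le> card (Sn - {p})" using finSn by (intro card_mono) auto
      also have "\<dots> = card Sn - 1" using \<open>p \<in> Sn\<close> finSn by simp
      moreover have "card Sn > 0" using \<open>p \<in> Sn\<close> finSn card_gt_0_iff by blast
      ultimately have cS: "card Sm + 1 \<le> card Sn" by linarith
      have "real (tau n) \<le> (B * real p powr (real k * \<epsilon>)) * (B ^ card Sm * real m powr \<epsilon>)"
      proof -
        have "(real k + 1) * real (tau m) \<le> (B * real p powr (real k * \<epsilon>)) * (B ^ card Sm * real m powr \<epsilon>)"
          by (rule mult_mono[OF small[OF p(1), of k] IH[folded Sm_def]]) (use Bpos in auto)
        then show ?thesis using tn by linarith
      qed
      also have "\<dots> = B ^ (card Sm + 1) * real n powr \<epsilon>" using npow by (simp add: algebra_simps)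
      also have "\<dots> \<le> B ^ card Sn * real n powr \<epsilon>"
        using cS B1 by (intro mult_right_mono power_increasing) auto
      finally show ?thesis unfolding Sn_def .
    next
      case False
      have "real (tau n) \<le> (real p powr (real k * \<epsilon>)) * (B ^ card Sm * real m powr \<epsilon>)"
      proof -
        have "(real k + 1) * real (tau m) \<le> (real p powr (real k * \<epsilon>)) * (B ^ card Sm * real m powr \<epsilon>)"
          by (rule mult_mono[OF big[OF p(1), of k] IH[folded Sm_def]]) (use Bpos False in auto)
        then show ?thesis using tn by linarith
      qed
      also have "\<dots> = B ^ card Sm * real n powr \<epsilon>" using npow by (simp add: algebra_simps)
      also have "\<dots> \<le> B ^ card Sn * real n powr \<epsilon>"
        using SmSn finSn B1 by (intro mult_right_mono power_increasing card_mono) auto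
      finally show ?thesis unfolding Sn_def .
    qed
  qed
qed




lemma tau_bound:
  fixes \<epsilon> :: real
  assumes eps: "\<epsilon> > 0"
  shows "\<exists>C>0. \<forall>n>0. real (tau n) \<le> C * real n powr \<epsilon>"
proof -
  define P0 where "P0 = nat \<lceil>2 powr (1/\<epsilon>)\<rceil>"
  define c where "c = \<epsilon> * ln 2"
  have c0: "c > 0" unfolding c_def using eps by simp
  define B where "B = 1 + 1/c"
  have B1: "B \<ge> 1" unfolding B_def using c0 by simp
  have big: "real k + 1 \<le> real p powr (real k * \<epsilon>)" if "prime p" "p \<ge> P0" for p k
  proof -
    have "real p \<ge> 2 powr (1/\<epsilon>)" using that(2) unfolding P0_def by linarith
    then have "real p powr \<epsilon> \<ge> (2 powr (1/\<epsilon>)) powr \<epsilon>" using eps by (intro powr_mono2) auto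
    also have "(2 powr (1/\<epsilon>)) powr \<epsilon> = 2" using eps by (simp add: powr_powr)
    finally have p2: "real p powr \<epsilon> \<ge> 2" .
    have "real k + 1 \<le> 2 ^ k"
    proof -
      have "k < 2^k" by (rule less_exp)
      then have "k + 1 \<le> (2::nat)^k" by (simp add: Suc_le_eq)
      then have "real (k + 1) \<le> real ((2::nat)^k)" by (simp only: of_nat_le_iff)
      then show ?thesis by simp
    qed
    also have "(2::real) ^ k \<le> (real p powr \<epsilon>) ^ k" using p2 by (intro power_mono) auto
    also have "(real p powr \<epsilon>) ^ k = real p powr (real k * \<epsilon>)"
    proof -
      have pp: "real p > 0" using prime_gt_0_nat[OF that(1)] by simp
      have "(real p powr \<epsilon>) ^ k = (real p powr \<epsilon>) powr real k" using pp by (simp add: powr_realpow)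
      also have "\<dots> = real p powr (real k * \<epsilon>)" by (simp add: powr_powr mult.commute)
      finally show ?thesis .
    qed
    finally show ?thesis .
  qed
  have small: "real k + 1 \<le> B * real p powr (real k * \<epsilon>)" if "prime p" for p k
  proof -
    have p2: "real p \<ge> 2" using prime_ge_2_nat[OF that] by simp
    have "1 + real k * c \<le> exp (real k * c)" by (rule exp_ge_add_one_self)
    also have "exp (real k * c) = 2 powr (real k * \<epsilon>)" unfolding c_def by (simp add: powr_def mult.commute mult.left_commute)
    also have "\<dots> \<le> real p powr (real k * \<epsilon>)" using p2 eps by (intro powr_mono2) auto
    finally have h: "1 + real k * c \<le> real p powr (real k * \<epsilon>)" .
    have "real k + 1 \<le> B * (1 + real k * c)"
    proof -
      have "B * (1 + real k * c) = 1 + real k * c + 1/c + real k" unfolding B_def using c0 by (simp add: field_simps)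
      moreover have "real k * c \<ge> 0" "1/c \<ge> 0" using c0 by auto
      ultimately show ?thesis by linarith
    qed
    also have "\<dots> \<le> B * real p powr (real k * \<epsilon>)" using h B1 by (intro mult_left_mono) auto
    finally show ?thesis .
  qed
  have aux: "real (tau n) \<le> B ^ card {p. prime p \<and> p dvd n \<and> p < P0} * real n powr \<epsilon>" if "n > 0" for n
    by (rule tau_bound_aux[OF eps B1 big small that])
  show ?thesis
  proof (intro exI[of _ "B ^ P0"] conjI allI impI)
    show "B ^ P0 > 0" using B1 by simp
    fix n :: nat assume n: "n > 0"
    have "card {p. prime p \<and> p dvd n \<and> p < P0} \<le> card {..<P0}" by (intro card_mono) auto
    then have "B ^ card {p. prime p \<and> p dvd n \<and> p < P0} \<le> B ^ P0" using B1 by (intro power_increasing) auto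
    then have "B ^ card {p. prime p \<and> p dvd n \<and> p < P0} * real n powr \<epsilon> \<le> B ^ P0 * real n powr \<epsilon>"
      by (intro mult_right_mono) auto
    then show "real (tau n) \<le> B ^ P0 * real n powr \<epsilon>" using aux[OF n] by linarith
  qed
qed

lemma divs_tau:
  fixes m :: int
  assumes "m > 0"
  shows "card (divs m) = tau (nat m)"
proof -
  have "divs m = int ` {d. d dvd nat m}"
  proof
    show "divs m \<subseteq> int ` {d. d dvd nat m}"
    proof
      fix d assume "d \<in> divs m"
      then have d: "d > 0" "d dvd m" unfolding divs_def by auto
      then have "nat d dvd nat m" using assms by (simp add: nat_dvd_iff)
      moreover have "d = int (nat d)" using d by simp
      ultimately show "d \<in> int ` {d. d dvd nat m}" by blast
    qed
  next
    show "int ` {d. d dvd nat m} \<subseteq> divs m"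
    proof
      fix d assume "d \<in> int ` {d. d dvd nat m}"
      then obtain d' where d': "d = int d'" "d' dvd nat m" by auto
      then have "d' > 0" using assms by (metis dvd_0_left_iff nat_0_less_mult_iff gr0I less_numeral_extra(3) nat_neq_iff zero_less_nat_eq)
      moreover have "int d' dvd m"
      proof -
        have "int d' dvd int (nat m)" using d'(2) by (simp only: of_nat_dvd_iff)
        then show ?thesis using assms by simp
      qed
      ultimately show "d \<in> divs m" using d' unfolding divs_def by auto
    qed
  qed
  then show ?thesis unfolding tau_def by (simp add: card_image)
qed

lemma S2_bound:
  fixes \<delta> :: real
  assumes "\<delta> > 0"
  shows "\<exists>C\<ge>1. \<forall>a b m :: int. a > 0 \<longrightarrow> b > 0 \<longrightarrow> m > 0 \<longrightarrow> real (card (S2 a b m)) \<le> C * real_of_int m powr \<delta>"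
proof -
  obtain C1 where C1: "C1 > 0" "\<And>n. n > 0 \<Longrightarrow> real (tau n) \<le> C1 * real n powr (\<delta>/8)"
    using tau_bound[of "\<delta>/8"] assms by auto
  define C where "C = max 1 (10 * C1^4)"
  show ?thesis
  proof (intro exI[of _ C] conjI allI impI)
    show "C \<ge> 1" unfolding C_def by simp
    fix a b m :: int assume a: "a > 0" and b: "b > 0" and m: "m > 0"
    have m2: "nat (m^2) > 0" using m by simp
    have cS: "real (card (S2 a b m)) \<le> 10 * real (card (divs (m^2)))^4"
    proof -
      have "real (card (S2 a b m)) \<le> real (10 * card (divs (m^2))^4)"
        using S2_count[OF a b m] by (simp only: of_nat_le_iff)
      then show ?thesis by simp
    qed
    have dt: "real (card (divs (m^2))) = real (tau (nat (m^2)))" using m by (simp add: divs_tau)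
    have pw: "real (nat (m^2)) powr (\<delta>/8) = real_of_int m powr (\<delta>/4)"
    proof -
      have "real (nat (m^2)) = real_of_int m ^ 2" using m by simp
      also have "\<dots> = real_of_int m powr (real 2)" using m by (simp only: powr_realpow of_int_0_less_iff)
      finally have "real (nat (m^2)) powr (\<delta>/8) = (real_of_int m powr (real 2)) powr (\<delta>/8)" by simp
      also have "\<dots> = real_of_int m powr (\<delta>/4)" by (simp only: powr_powr) simp
      finally show ?thesis .
    qed
    have t: "real (card (divs (m^2))) \<le> C1 * real_of_int m powr (\<delta>/4)"
      using C1(2)[OF m2] dt pw by simp
    have "real (card (divs (m^2)))^4 \<le> (C1 * real_of_int m powr (\<delta>/4))^4"
      by (rule power_mono[OF t]) simp
    then have "real (card (S2 a b m)) \<le> 10 * (C1 * real_of_int m powr (\<delta>/4))^4"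
      using cS by linarith
    also have "\<dots> = 10 * C1^4 * real_of_int m powr \<delta>"
    proof -
      have "(real_of_int m powr (\<delta>/4))^4 = real_of_int m powr (real 4 * (\<delta>/4))"
        using m by (intro powr_power) simp
      then have "(real_of_int m powr (\<delta>/4))^4 = real_of_int m powr \<delta>" by simp
      then show ?thesis by (simp add: power_mult_distrib)
    qed
    also have "\<dots> \<le> C * real_of_int m powr \<delta>" unfolding C_def by (intro mult_right_mono) auto
    finally show "real (card (S2 a b m)) \<le> C * real_of_int m powr \<delta>" .
  qed
qed




lemma card_K:
  fixes n :: nat
  assumes n: "n \<ge> 1"
  shows "finite {k::int. k^2 \<le> int n}" "real (card {k::int. k^2 \<le> int n}) \<le> 3 * sqrt (real n)"
proof -
  define s where "s = \<lfloor>sqrt (real n)\<rfloor>"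
  have sub: "{k::int. k^2 \<le> int n} \<subseteq> {-s..s}"
  proof
    fix k :: int assume "k \<in> {k::int. k^2 \<le> int n}"
    then have "real_of_int (k^2) \<le> real_of_int (int n)" by (simp only: mem_Collect_eq of_int_le_iff)
    then have kk: "real_of_int k ^ 2 \<le> real n" by simp
    have "\<bar>real_of_int k\<bar> \<le> sqrt (real n)" using real_sqrt_le_mono[OF kk] by simp
    then have "\<bar>k\<bar> \<le> s" unfolding s_def by linarith
    then show "k \<in> {-s..s}" by auto
  qed
  show "finite {k::int. k^2 \<le> int n}" by (rule finite_subset[OF sub]) simp
  have "card {k::int. k^2 \<le> int n} \<le> card {-s..s}" by (rule card_mono[OF _ sub]) simp
  also have "card {-s..s} = nat (2*s + 1)" by simp
  finally have "real (card {k::int. k^2 \<le> int n}) \<le> real (nat (2*s+1))" by simp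
  also have "\<dots> = 2 * real_of_int s + 1" using s_def by (simp add: s_def)
  also have "\<dots> \<le> 2 * sqrt (real n) + 1" unfolding s_def by linarith
  also have "\<dots> \<le> 3 * sqrt (real n)" using n by simp
  finally show "real (card {k::int. k^2 \<le> int n}) \<le> 3 * sqrt (real n)" .
qed

lemma S2_small: "a > 0 \<Longrightarrow> b > 0 \<Longrightarrow> m \<le> 0 \<Longrightarrow> card (S2 a b m) \<le> 1"
proof -
  assume a: "a > 0" and b: "b > 0" and m: "m \<le> 0"
  have "S2 a b m \<subseteq> {(0,0)}"
  proof
    fix P assume "P \<in> S2 a b m"
    then obtain x y where P: "P = (x,y)" "a*x^2 + b*y^2 = m" by (auto simp: S2_def)
    have "a*x^2 \<ge> 0" "b*y^2 \<ge> 0" using a b by auto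
    then have "a*x^2 = 0" "b*y^2 = 0" using P m by linarith+
    then show "P \<in> {(0,0)}" using P a b by auto
  qed
  then have "card (S2 a b m) \<le> card {(0::int,0::int)}" by (intro card_mono) auto
  then show ?thesis by simp
qed


lemma main_bound:
  fixes as :: "int list" and n d :: nat and C2 \<delta> :: real
  assumes d: "d \<ge> 2" and len: "length as = d" and pos: "\<forall>a\<in>set as. a > 0" and n: "n \<ge> 1"
    and C2: "C2 \<ge> 1" and S2b: "\<And>a b m. a>0 \<Longrightarrow> b>0 \<Longrightarrow> m>0 \<Longrightarrow> real (card (S2 a b m)) \<le> C2 * real_of_int m powr \<delta>"
    and \<delta>: "\<delta> > 0"
  shows "real (rQ as n) \<le> 3^(d-2) * C2 * real n powr (real d/2 - 1 + \<delta>)"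
proof -
  obtain a1 a2 r where as: "as = a1 # a2 # r" and lr: "length r = d - 2"
    using len d by (cases d) (auto simp: length_Suc_conv numeral_2_eq_2 dest!: Suc_le_D)
  have a1: "a1 > 0" and a2: "a2 > 0" and rpos: "\<forall>a\<in>set r. a > 0" using pos as by auto
  define q where "q = (\<lambda>kr::int list. \<Sum>i<length r. r!i * (kr!i)^2)"
  define K where "K = {k::int. k^2 \<le> int n}"
  define Box where "Box = {kr. set kr \<subseteq> K \<and> length kr = d - 2}"
  define R where "R = {ks :: int list. length ks = length as \<and> (\<Sum>i<length as. as!i * (ks!i)^2) = int n}"
  have rq: "rQ as n = card R" by (simp add: rQ_def R_def)
  have sumsplit: "(\<Sum>i<length as. as!i * ((k1#k2#kr)!i)^2) = a1*k1^2 + a2*k2^2 + q kr" for k1 k2 kr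
    unfolding as q_def length_Cons sum.lessThan_Suc_shift by simp
  have qterm: "r!i * (kr!i)^2 \<le> q kr" if "i < length r" for kr i
  proof -
    have "(\<lambda>j. r!j * (kr!j)^2) i \<le> (\<Sum>j<length r. r!j * (kr!j)^2)"
    proof (rule member_le_sum)
      show "i \<in> {..<length r}" using that by simp
      fix j assume "j \<in> {..<length r} - {i}"
      then have "r!j > 0" using rpos by auto
      then show "0 \<le> r!j * (kr!j)^2" by simp
    qed simp
    then show ?thesis unfolding q_def by simp
  qed
  have rnth: "r!i > 0" if "i < length r" for i using rpos nth_mem[OF that] by blast
  have qnn: "q kr \<ge> 0" for kr
    unfolding q_def
  proof (intro sum_nonneg)
    fix i assume "i \<in> {..<length r}"
    then have "r!i > 0" using rnth by simp
    then show "0 \<le> r!i * (kr!i)^2" by simp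
  qed
  have finK: "finite K" and cK: "real (card K) \<le> 3 * sqrt (real n)" using card_K[OF n] unfolding K_def by auto
  have finBox: "finite Box" unfolding Box_def using finK by (rule finite_lists_length_eq)
  define \<psi> where "\<psi> = (\<lambda>ks::int list. (drop 2 ks, (ks!0, ks!1)))"
  have dec: "\<exists>k1 k2 kr. ks = k1#k2#kr \<and> length kr = d - 2" if "ks \<in> R" for ks
  proof -
    have "length ks = Suc (Suc (d-2))" using that len d unfolding R_def by simp
    then show ?thesis by (auto simp: length_Suc_conv)
  qed
  have inj: "inj_on \<psi> R"
  proof (rule inj_onI)
    fix ks ks' assume "ks \<in> R" "ks' \<in> R" "\<psi> ks = \<psi> ks'"
    then show "ks = ks'" using dec[OF \<open>ks \<in> R\<close>] dec[OF \<open>ks' \<in> R\<close>] by (auto simp: \<psi>_def)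
  qed
  have img: "\<psi> ` R \<subseteq> Sigma Box (\<lambda>kr. S2 a1 a2 (int n - q kr))"
  proof
    fix z assume "z \<in> \<psi> ` R"
    then obtain ks where ks: "ks \<in> R" "z = \<psi> ks" by auto
    obtain k1 k2 kr where kk: "ks = k1#k2#kr" "length kr = d - 2" using dec[OF ks(1)] by auto
    have eq: "a1*k1^2 + a2*k2^2 + q kr = int n" using ks(1) sumsplit[of k1 k2 kr] kk unfolding R_def by simp
    have "a1*k1^2 \<ge> 0" "a2*k2^2 \<ge> 0" using a1 a2 by auto
    then have "q kr \<le> int n" using eq by linarith
    have "set kr \<subseteq> K"
    proof
      fix k assume "k \<in> set kr"
      then obtain i where i: "i < length kr" "kr!i = k" by (auto simp: in_set_conv_nth)
      have il: "i < length r" using i kk lr by simp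
      have "r!i > 0" using rpos il by auto
      then have "k^2 \<le> r!i * k^2" by (simp add: mult_le_cancel_right1)
      also have "\<dots> \<le> q kr" using qterm[OF il, of kr] i by simp
      also have "\<dots> \<le> int n" by fact
      finally show "k \<in> K" unfolding K_def by simp
    qed
    then have "kr \<in> Box" unfolding Box_def using kk by simp
    moreover have "(k1, k2) \<in> S2 a1 a2 (int n - q kr)" using eq by (simp add: S2_def)
    ultimately show "z \<in> Sigma Box (\<lambda>kr. S2 a1 a2 (int n - q kr))" using ks kk by (simp add: \<psi>_def)
  qed
  have npos: "real n powr \<delta> \<ge> 1" using n \<delta> by (intro ge_one_powr_ge_zero) auto
  have each: "real (card (S2 a1 a2 (int n - q kr))) \<le> C2 * real n powr \<delta>" for kr
  proof (cases "int n - q kr > 0")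
    case True
    have "real (card (S2 a1 a2 (int n - q kr))) \<le> C2 * real_of_int (int n - q kr) powr \<delta>"
      by (rule S2b[OF a1 a2 True])
    also have "\<dots> \<le> C2 * real n powr \<delta>"
    proof -
      have "real_of_int (int n - q kr) \<le> real n" using qnn[of kr] by simp
      then have "real_of_int (int n - q kr) powr \<delta> \<le> real n powr \<delta>"
        using True \<delta> by (intro powr_mono2) auto
      then show ?thesis using C2 by simp
    qed
    finally show ?thesis .
  next
    case False
    then have "card (S2 a1 a2 (int n - q kr)) \<le> 1" using S2_small[OF a1 a2] by simp
    then have "real (card (S2 a1 a2 (int n - q kr))) \<le> 1" by simp
    also have "1 \<le> C2 * real n powr \<delta>"
    proof -
      have "1 * 1 \<le> C2 * real n powr \<delta>" using C2 npos by (intro mult_mono) auto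
      then show ?thesis by simp
    qed
    finally show ?thesis .
  qed
  have "card R \<le> card (Sigma Box (\<lambda>kr. S2 a1 a2 (int n - q kr)))"
    by (rule card_inj_on_le[OF inj img]) (use finBox finite_S2[OF a1 a2] in auto)
  also have "\<dots> = (\<Sum>kr\<in>Box. card (S2 a1 a2 (int n - q kr)))"
    by (rule card_SigmaI[OF finBox]) (use finite_S2[OF a1 a2] in auto)
  finally have "real (card R) \<le> real (\<Sum>kr\<in>Box. card (S2 a1 a2 (int n - q kr)))"
    by (simp only: of_nat_le_iff)
  also have "\<dots> = (\<Sum>kr\<in>Box. real (card (S2 a1 a2 (int n - q kr))))" by (simp only: of_nat_sum)
  also have "\<dots> \<le> (\<Sum>kr\<in>Box. C2 * real n powr \<delta>)" using each by (intro sum_mono) auto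
  also have "\<dots> = real (card Box) * (C2 * real n powr \<delta>)" by simp
  finally have c1: "real (card R) \<le> real (card Box) * (C2 * real n powr \<delta>)" .
  have "real (card Box) = real (card K) ^ (d-2)"
    unfolding Box_def using card_lists_length_eq[OF finK] by simp
  also have "\<dots> \<le> (3 * sqrt (real n)) ^ (d-2)" using cK by (intro power_mono) auto
  finally have c2: "real (card Box) \<le> (3 * sqrt (real n)) ^ (d-2)" .
  have "real (card Box) * (C2 * real n powr \<delta>) \<le> (3 * sqrt (real n)) ^ (d-2) * (C2 * real n powr \<delta>)"
    using C2 npos by (intro mult_right_mono[OF c2]) auto
  with c1 have cR: "real (card R) \<le> (3 * sqrt (real n)) ^ (d-2) * (C2 * real n powr \<delta>)" by linarith
  have e1: "(3 * sqrt (real n)) ^ (d-2) = 3^(d-2) * real n powr (real (d-2) * (1/2))"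
  proof -
    have "sqrt (real n) = real n powr (1/2)" by (simp add: powr_half_sqrt)
    then have "sqrt (real n) ^ (d-2) = real n powr (real (d-2) * (1/2))"
      using n by (simp add: powr_power)
    then show ?thesis by (simp add: power_mult_distrib)
  qed
  have e2: "real n powr (real (d-2) * (1/2)) * real n powr \<delta> = real n powr (real d/2 - 1 + \<delta>)"
  proof -
    have r2: "real (d-2) = real d - 2" using d by simp
    have ex: "real (d-2) * (1/2) + \<delta> = real d/2 - 1 + \<delta>" unfolding r2 by (simp add: field_simps)
    have "real n powr (real (d-2) * (1/2)) * real n powr \<delta> = real n powr (real (d-2) * (1/2) + \<delta>)"
      by (simp only: powr_add)
    then show ?thesis unfolding ex .
  qed
  have eqf: "(3 * sqrt (real n)) ^ (d-2) * (C2 * real n powr \<delta>) = 3^(d-2) * C2 * real n powr (real d/2 - 1 + \<delta>)"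
    unfolding e1 e2[symmetric] by (simp only: mult_ac)
  have "real (rQ as n) = real (card R)" using rq by simp
  then show ?thesis using cR eqf by linarith
qed



theorem lemma3p5:
  fixes d :: nat
  assumes "d \<ge> 2"
  shows "\<exists>\<delta>0>0. \<forall>\<delta>::real. 0 < \<delta> \<and> \<delta> < \<delta>0 \<longrightarrow>
           (\<exists>C::real. \<forall>as::int list. length as = d \<and> (\<forall>a\<in>set as. a > 0) \<longrightarrow>
              (\<forall>n::nat. n \<ge> 1 \<longrightarrow>
                 real (rQ as n) \<le> C * real n powr (real d / 2 - 1 + \<delta>)))"
proof -
  have main: "\<exists>C::real. \<forall>as::int list. length as = d \<and> (\<forall>a\<in>set as. a > 0) \<longrightarrow>
              (\<forall>n::nat. n \<ge> 1 \<longrightarrow> real (rQ as n) \<le> C * real n powr (real d / 2 - 1 + \<delta>))"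
    if \<delta>: "\<delta> > 0" for \<delta> :: real
  proof -
    obtain C2 where C2: "C2 \<ge> 1"
      and S2b: "\<forall>a b m :: int. a > 0 \<longrightarrow> b > 0 \<longrightarrow> m > 0 \<longrightarrow> real (card (S2 a b m)) \<le> C2 * real_of_int m powr \<delta>"
      using S2_bound[OF \<delta>] by blast
    have "\<forall>as::int list. length as = d \<and> (\<forall>a\<in>set as. a > 0) \<longrightarrow>
              (\<forall>n::nat. n \<ge> 1 \<longrightarrow> real (rQ as n) \<le> (3^(d-2) * C2) * real n powr (real d / 2 - 1 + \<delta>))"
    proof (intro allI impI)
      fix as :: "int list" and n :: nat
      assume A: "length as = d \<and> (\<forall>a\<in>set as. a > 0)" and n: "n \<ge> 1"
      show "real (rQ as n) \<le> (3^(d-2) * C2) * real n powr (real d / 2 - 1 + \<delta>)"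
        by (rule main_bound[OF assms _ _ n C2 _ \<delta>]) (use A S2b in auto)
    qed
    then show ?thesis by blast
  qed
  have "(0::real) < 1" by simp
  moreover have "\<forall>\<delta>::real. 0 < \<delta> \<and> \<delta> < 1 \<longrightarrow>
           (\<exists>C::real. \<forall>as::int list. length as = d \<and> (\<forall>a\<in>set as. a > 0) \<longrightarrow>
              (\<forall>n::nat. n \<ge> 1 \<longrightarrow>
                 real (rQ as n) \<le> C * real n powr (real d / 2 - 1 + \<delta>)))"
    using main by blast
  ultimately show ?thesis by blast
qed

end
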